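(* Let $(M,g_{\mu\nu})$ be a four-dimensional spacetime, let $T_{\mu\nu}$ be a given stress-energy tensor on $M$, let $\kappa=8\pi G/c^{4}$ and let $\Lambda\in\mathbb{R}$. Suppose $g_{\mu\nu}$ is a solution of Einstein's field equations $$R_{\mu\nu}-\tfrac12 R g_{\mu\nu}+\Lambda g_{\mu\nu}=\kappa T_{\mu\nu}$$ whose Ricci scalar $R=g^{\mu\nu}R_{\mu\nu}$ is equal to a constant $k$, and let $f$ be a differentiable real function. Then: (i) If $f'(k)\neq 0$, then $g_{\mu\nu}$ is a solution of the $f(R)$ field equations $f'(k)R_{\mu\nu}-\tfrac12 f(k)g_{\mu\nu}=\kappa T_{\mu\nu}$ if and only if $$\Big[\big(\tfrac{k}{2}-\Lambda\big)f'(k)-\tfrac12 f(k)\Big]g_{\mu\nu}+\big(f'(k)-1\big)\kappa T_{\mu\nu}=0.$$ (ii) If $f'(k)=0$ and $f(k)\neq \frac{k-4\Lambda}{2}$, then $g_{\mu\nu}$ is not a solution of the $f(R)$ field equations (so, for the given $T_{\mu\nu}$, GR and the $f(R)$ theory have no common solution with constant Ricci scalar $k$). (iii) If $f'(k)=0$ and $f(k)=\frac{k-4\Lambda}{2}$, then $g_{\mu\nu}$ is a solution of the $f(R)$ field equations whenever $g_{\mu\nu}$ has vanishing Ricci tensor or $g_{\mu\nu}$ is a vacuum solution ($T_{\mu\nu}=0$).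
   Context: $R_{\mu\nu}$ denotes the Ricci tensor of $g_{\mu\nu}$, $\nabla_\mu$ its Levi-Civita covariant derivative and $\square=g^{\mu\nu}\nabla_\mu\nabla_\nu$. For a differentiable function $f$, the $f(R)$ field equations (obtained by varying $\frac{1}{2\kappa}\int\sqrt{-g}\,f(R)\,d^4x+S_m$) are $$f'(R)R_{\mu\nu}-\tfrac12 f(R)g_{\mu\nu}-\nabla_\mu\nabla_\nu f'(R)+\square f'(R)\,g_{\mu\nu}=\kappa T_{\mu\nu};$$ for a metric whose Ricci scalar is the constant $k$ the derivative terms vanish and these equations reduce to $f'(k)R_{\mu\nu}-\tfrac12 f(k)g_{\mu\nu}=\kappa T_{\mu\nu}$. A vacuum solution is one with $T_{\mu\nu}=0$. *)

theory Defs
  imports "HOL-Analysis.Analysis"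
begin

text \<open>Local coordinate model: a spacetime region is an open set U of R^4 (coordinates
  x^0..x^3, index type 4); tensor fields are given by their components.\<close>

type_synonym field2 = "real^4 \<Rightarrow> real^4^4"

definition pd :: "4 \<Rightarrow> (real^4 \<Rightarrow> real) \<Rightarrow> real^4 \<Rightarrow> real" where
  "pd \<sigma> h x = deriv (\<lambda>t. h (x + t *\<^sub>R axis \<sigma> 1)) 0"

definition ginv :: "field2 \<Rightarrow> real^4 \<Rightarrow> real^4^4" where
  "ginv g x = matrix_inv (g x)"

definition christoffel :: "field2 \<Rightarrow> real^4 \<Rightarrow> 4 \<Rightarrow> 4 \<Rightarrow> 4 \<Rightarrow> real" where
  "christoffel g x l \<mu> \<nu> = (1/2) * (\<Sum>\<rho>\<in>UNIV. ginv g x $ l $ \<rho> *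
     (pd \<mu> (\<lambda>y. g y $ \<rho> $ \<nu>) x + pd \<nu> (\<lambda>y. g y $ \<rho> $ \<mu>) x - pd \<rho> (\<lambda>y. g y $ \<mu> $ \<nu>) x))"

text \<open>Ricci tensor R_{mu nu} = R^l_{mu l nu}.\<close>
definition ricci :: "field2 \<Rightarrow> field2" where
  "ricci g x = (\<chi> \<mu> \<nu>.
     (\<Sum>l\<in>UNIV. pd l (\<lambda>y. christoffel g y l \<mu> \<nu>) x - pd \<nu> (\<lambda>y. christoffel g y l \<mu> l) x)
   + (\<Sum>l\<in>UNIV. \<Sum>s\<in>UNIV. christoffel g x l l s * christoffel g x s \<mu> \<nu>
                           - christoffel g x l \<nu> s * christoffel g x s \<mu> l))"

definition ricci_scalar :: "field2 \<Rightarrow> real^4 \<Rightarrow> real" where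
  "ricci_scalar g x = (\<Sum>\<mu>\<in>UNIV. \<Sum>\<nu>\<in>UNIV. ginv g x $ \<mu> $ \<nu> * ricci g x $ \<mu> $ \<nu>)"

definition cov_hess :: "field2 \<Rightarrow> (real^4 \<Rightarrow> real) \<Rightarrow> real^4 \<Rightarrow> 4 \<Rightarrow> 4 \<Rightarrow> real" where
  "cov_hess g \<phi> x \<mu> \<nu> = pd \<mu> (pd \<nu> \<phi>) x - (\<Sum>l\<in>UNIV. christoffel g x l \<mu> \<nu> * pd l \<phi> x)"

definition box :: "field2 \<Rightarrow> (real^4 \<Rightarrow> real) \<Rightarrow> real^4 \<Rightarrow> real" where
  "box g \<phi> x = (\<Sum>\<mu>\<in>UNIV. \<Sum>\<nu>\<in>UNIV. ginv g x $ \<mu> $ \<nu> * cov_hess g \<phi> x \<mu> \<nu>)"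

definition eta :: "real^4^4" where
  "eta = (\<chi> i j. if i = j then (if i = 0 then -1 else 1) else 0)"

text \<open>Spacetime metric on U: symmetric, Lorentzian (congruent to eta) at each point,
  components twice differentiable.\<close>
definition spacetime_metric :: "(real^4) set \<Rightarrow> field2 \<Rightarrow> bool" where
  "spacetime_metric U g \<longleftrightarrow> open U \<and>
     (\<forall>x\<in>U. transpose (g x) = g x \<and>
        (\<exists>P::real^4^4. invertible P \<and> g x = transpose P ** eta ** P)) \<and>
     (\<forall>\<mu> \<nu>. \<forall>x\<in>U. (\<lambda>y. g y $ \<mu> $ \<nu>) differentiable (at x) \<and>
        (\<forall>\<sigma>. pd \<sigma> (\<lambda>y. g y $ \<mu> $ \<nu>) differentiable (at x)))"

definition kappa :: "real \<Rightarrow> real \<Rightarrow> real" where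
  "kappa G c = 8 * pi * G / c ^ 4"

definition einstein_solution :: "(real^4) set \<Rightarrow> real \<Rightarrow> real \<Rightarrow> field2 \<Rightarrow> field2 \<Rightarrow> bool" where
  "einstein_solution U \<kappa> \<Lambda> g T \<longleftrightarrow> (\<forall>x\<in>U. \<forall>\<mu> \<nu>.
     ricci g x $ \<mu> $ \<nu> - (1/2) * ricci_scalar g x * g x $ \<mu> $ \<nu> + \<Lambda> * g x $ \<mu> $ \<nu>
       = \<kappa> * T x $ \<mu> $ \<nu>)"

definition fR_solution :: "(real^4) set \<Rightarrow> real \<Rightarrow> (real \<Rightarrow> real) \<Rightarrow> field2 \<Rightarrow> field2 \<Rightarrow> bool" where
  "fR_solution U \<kappa> f g T \<longleftrightarrow> (\<forall>x\<in>U. \<forall>\<mu> \<nu>.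
     deriv f (ricci_scalar g x) * ricci g x $ \<mu> $ \<nu>
     - (1/2) * f (ricci_scalar g x) * g x $ \<mu> $ \<nu>
     - cov_hess g (\<lambda>y. deriv f (ricci_scalar g y)) x \<mu> \<nu>
     + box g (\<lambda>y. deriv f (ricci_scalar g y)) x * g x $ \<mu> $ \<nu>
       = \<kappa> * T x $ \<mu> $ \<nu>)"

end

theory Submission imports Defs begin
lemma eta_inv: "eta ** eta = mat 1"
  by (simp add: vec_eq_iff eta_def mat_def matrix_matrix_mult_def if_distrib[of "\<lambda>x. x * _"] cong: if_cong)
lemma inv_left: "invertible (A::real^4^4) \<Longrightarrow> matrix_inv A ** A = mat 1"
  unfolding matrix_inv_def invertible_def by (rule someI2_ex) auto
lemma trace4: assumes "invertible (A::real^4^4)" "transpose A = A"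
  shows "(\<Sum>\<mu>\<in>UNIV. \<Sum>\<nu>\<in>UNIV. matrix_inv A $ \<mu> $ \<nu> * A $ \<mu> $ \<nu>) = 4"
proof -
  have "\<And>\<mu>. (\<Sum>\<nu>\<in>UNIV. matrix_inv A $ \<mu> $ \<nu> * A $ \<mu> $ \<nu>) = (matrix_inv A ** A) $ \<mu> $ \<mu>"
    unfolding matrix_matrix_mult_def using assms(2)
    by (simp add: vec_eq_iff transpose_def)
  then show ?thesis using inv_left[OF assms(1)] by (simp add: mat_def)
qed
lemma pd_const: assumes "open U" "x \<in> U" "\<forall>y\<in>U. h y = c" shows "pd \<sigma> h x = 0"
proof -
  let ?S = "{t::real. x + t *\<^sub>R axis \<sigma> 1 \<in> U}"
  have o: "open ?S"
  proof -
    have "continuous_on UNIV (\<lambda>t::real. x + t *\<^sub>R axis \<sigma> (1::real))"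
      by (intro continuous_intros)
    from open_vimage[OF assms(1) this] show ?thesis by (simp add: vimage_def)
  qed
  have "((\<lambda>t. h (x + t *\<^sub>R axis \<sigma> 1)) has_field_derivative 0) (at 0)"
    by (rule has_field_derivative_transform_within_open[OF DERIV_const[of c] o]) (use assms in auto)
  then show ?thesis unfolding pd_def by (rule DERIV_imp_deriv)
qed

lemma g_inv: assumes "spacetime_metric U g" "x \<in> U" shows "invertible (g x)"
proof -
  from assms obtain P :: "real^4^4" where P: "invertible P" "g x = transpose P ** eta ** P"
    unfolding spacetime_metric_def by blast
  have "invertible eta" using eta_inv unfolding invertible_def by blast
  moreover have "invertible (transpose P)" using P(1) by (simp add: invertible_det_nz det_transpose)
  ultimately show ?thesis using P by (simp add: invertible_mult)
qed

lemma trace_eq: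
  fixes A B :: "real^4^4"
  assumes "\<forall>\<mu> \<nu>. A $ \<mu> $ \<nu> = B $ \<mu> $ \<nu>"
  shows "(\<Sum>\<mu>\<in>UNIV. \<Sum>\<nu>\<in>UNIV. M $ \<mu> $ \<nu> * A $ \<mu> $ \<nu>) = (\<Sum>\<mu>\<in>UNIV. \<Sum>\<nu>\<in>UNIV. M $ \<mu> $ \<nu> * B $ \<mu> $ \<nu>)"
  using assms by simp

theorem mainTheorem1:
  fixes U :: "(real^4) set" and g T :: field2 and G c \<Lambda> k :: real and f :: "real \<Rightarrow> real"
  assumes "U \<noteq> {}"
    and "spacetime_metric U g"
    and "\<forall>x\<in>U. transpose (T x) = T x"
    and "G > 0" and "c > 0"
    and "einstein_solution U (kappa G c) \<Lambda> g T"
    and "\<forall>x\<in>U. ricci_scalar g x = k"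
    and "\<forall>r. f differentiable (at r)"
  shows "(deriv f k \<noteq> 0 \<longrightarrow>
           (fR_solution U (kappa G c) f g T \<longleftrightarrow>
            (\<forall>x\<in>U. \<forall>\<mu> \<nu>. ((k/2 - \<Lambda>) * deriv f k - (1/2) * f k) * g x $ \<mu> $ \<nu>
                           + (deriv f k - 1) * kappa G c * T x $ \<mu> $ \<nu> = 0)))
       \<and> (deriv f k = 0 \<and> f k \<noteq> (k - 4 * \<Lambda>) / 2 \<longrightarrow> \<not> fR_solution U (kappa G c) f g T)
       \<and> (deriv f k = 0 \<and> f k = (k - 4 * \<Lambda>) / 2 \<and>
           ((\<forall>x\<in>U. ricci g x = 0) \<or> (\<forall>x\<in>U. T x = 0))
           \<longrightarrow> fR_solution U (kappa G c) f g T)"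
proof -
  define \<kappa> where "\<kappa> = kappa G c"
  define F where "F = deriv f k"
  have oU: "open U" using assms(2) unfolding spacetime_metric_def by blast
  define phi where "phi = (\<lambda>y. deriv f (ricci_scalar g y))"
  have phiU: "\<forall>y\<in>U. phi y = F" using assms(7) by (simp add: phi_def F_def)
  have pd1: "\<forall>y\<in>U. pd \<nu> phi y = 0" for \<nu> using pd_const[OF oU _ phiU] by blast
  have ch: "cov_hess g phi x \<mu> \<nu> = 0" if "x \<in> U" for x \<mu> \<nu>
    unfolding cov_hess_def using pd_const[OF oU that pd1] pd_const[OF oU that phiU] by simp
  have bx: "box g phi x = 0" if "x \<in> U" for x
    unfolding box_def using ch[OF that] by simp
  have fR: "fR_solution U \<kappa> f g T \<longleftrightarrow> (\<forall>x\<in>U. \<forall>\<mu> \<nu>. F * ricci g x $ \<mu> $ \<nu> - 1/2 * f k * g x $ \<mu> $ \<nu> = \<kappa> * T x $ \<mu> $ \<nu>)"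
    unfolding fR_solution_def phi_def[symmetric] using ch bx assms(7) by (simp add: F_def)
  have E: "\<forall>x\<in>U. \<forall>\<mu> \<nu>. ricci g x $ \<mu> $ \<nu> = \<kappa> * T x $ \<mu> $ \<nu> + (k/2 - \<Lambda>) * g x $ \<mu> $ \<nu>"
    using assms(6,7) unfolding einstein_solution_def \<kappa>_def by (auto simp: algebra_simps)
  obtain x0 where x0: "x0 \<in> U" using assms(1) by blast
  define gi where "gi = ginv g x0"
  have tg: "(\<Sum>\<mu>\<in>UNIV. \<Sum>\<nu>\<in>UNIV. gi $ \<mu> $ \<nu> * g x0 $ \<mu> $ \<nu>) = 4"
    unfolding gi_def ginv_def using trace4 g_inv[OF assms(2) x0] assms(2) x0
    unfolding spacetime_metric_def by blast
  have tr: "(\<Sum>\<mu>\<in>UNIV. \<Sum>\<nu>\<in>UNIV. gi $ \<mu> $ \<nu> * ricci g x0 $ \<mu> $ \<nu>) = k"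
    using assms(7) x0 unfolding ricci_scalar_def gi_def by simp
  define tT where "tT = (\<Sum>\<mu>\<in>UNIV. \<Sum>\<nu>\<in>UNIV. gi $ \<mu> $ \<nu> * T x0 $ \<mu> $ \<nu>)"
  have "k = (\<Sum>\<mu>\<in>UNIV. \<Sum>\<nu>\<in>UNIV. gi $ \<mu> $ \<nu> * (\<kappa> * T x0 $ \<mu> $ \<nu> + (k/2 - \<Lambda>) * g x0 $ \<mu> $ \<nu>))"
    using tr E x0 by simp
  also have "\<dots> = \<kappa> * tT + (k/2 - \<Lambda>) * 4"
    unfolding tg[symmetric] tT_def
    by (simp add: distrib_left sum.distrib sum_distrib_left mult.left_commute)
  finally have trE: "k = \<kappa> * tT + (k/2 - \<Lambda>) * 4" .
  show ?thesis
    unfolding \<kappa>_def[symmetric] F_def[symmetric]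
  proof (intro conjI impI)
    assume "F \<noteq> 0"
    show "fR_solution U \<kappa> f g T \<longleftrightarrow> (\<forall>x\<in>U. \<forall>\<mu> \<nu>. ((k/2 - \<Lambda>) * F - (1/2) * f k) * g x $ \<mu> $ \<nu>
                           + (F - 1) * \<kappa> * T x $ \<mu> $ \<nu> = 0)"
    proof -
      have "(F * ricci g x $ \<mu> $ \<nu> - 1/2 * f k * g x $ \<mu> $ \<nu> = \<kappa> * T x $ \<mu> $ \<nu>) \<longleftrightarrow>
            (((k/2 - \<Lambda>) * F - (1/2) * f k) * g x $ \<mu> $ \<nu> + (F - 1) * \<kappa> * T x $ \<mu> $ \<nu> = 0)"
        if "x \<in> U" for x \<mu> \<nu>
      proof -
        have R: "ricci g x $ \<mu> $ \<nu> = \<kappa> * T x $ \<mu> $ \<nu> + (k/2 - \<Lambda>) * g x $ \<mu> $ \<nu>"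
          using E that by blast
        have "(F * ricci g x $ \<mu> $ \<nu> - 1/2 * f k * g x $ \<mu> $ \<nu> = \<kappa> * T x $ \<mu> $ \<nu>) \<longleftrightarrow>
              F * ricci g x $ \<mu> $ \<nu> - 1/2 * f k * g x $ \<mu> $ \<nu> - \<kappa> * T x $ \<mu> $ \<nu> = 0" by linarith
        also have "F * ricci g x $ \<mu> $ \<nu> - 1/2 * f k * g x $ \<mu> $ \<nu> - \<kappa> * T x $ \<mu> $ \<nu>
             = ((k/2 - \<Lambda>) * F - (1/2) * f k) * g x $ \<mu> $ \<nu> + (F - 1) * \<kappa> * T x $ \<mu> $ \<nu>"
          unfolding R by (simp add: algebra_simps)
        finally show ?thesis .
      qed
      then show ?thesis unfolding fR by auto
    qed
  next
    assume h: "F = 0 \<and> f k \<noteq> (k - 4 * \<Lambda>) / 2"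
    show "\<not> fR_solution U \<kappa> f g T"
    proof
      assume "fR_solution U \<kappa> f g T"
      then have "\<forall>\<mu> \<nu>. \<kappa> * T x0 $ \<mu> $ \<nu> = - 1/2 * f k * g x0 $ \<mu> $ \<nu>"
        using fR h x0 by auto
      then have "\<kappa> * tT = (\<Sum>\<mu>\<in>UNIV. \<Sum>\<nu>\<in>UNIV. gi $ \<mu> $ \<nu> * (- 1/2 * f k * g x0 $ \<mu> $ \<nu>))"
        unfolding tT_def sum_distrib_left
        by (intro sum.cong refl) (metis mult.left_commute)
      also have "\<dots> = - 1/2 * f k * 4"
        unfolding tg[symmetric] by (simp add: sum_distrib_left algebra_simps)
      finally show False using trE h by (auto simp: field_simps)
    qed
  next
    assume h: "F = 0 \<and> f k = (k - 4 * \<Lambda>) / 2 \<and> ((\<forall>x\<in>U. ricci g x = 0) \<or> (\<forall>x\<in>U. T x = 0))"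
    show "fR_solution U \<kappa> f g T"
      unfolding fR
    proof (cases "\<forall>x\<in>U. ricci g x = 0")
      case True
      then have "k = 0" using tr x0 by simp
      then show "\<forall>x\<in>U. \<forall>\<mu> \<nu>. F * ricci g x $ \<mu> $ \<nu> - 1/2 * f k * g x $ \<mu> $ \<nu> = \<kappa> * T x $ \<mu> $ \<nu>"
        using E True h by (auto simp: algebra_simps)
    next
      case False
      then have T0: "\<forall>x\<in>U. T x = 0" using h by blast
      then have "tT = 0" unfolding tT_def using x0 by simp
      then have "k = 4 * \<Lambda>" using trE by simp
      then show "\<forall>x\<in>U. \<forall>\<mu> \<nu>. F * ricci g x $ \<mu> $ \<nu> - 1/2 * f k * g x $ \<mu> $ \<nu> = \<kappa> * T x $ \<mu> $ \<nu>"
        using T0 h by simp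
    qed
  qed
qed

end
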